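(* Let $X$ and $Y$ be $n\times n$ Hermitian matrices whose Thompson metric $d=d_T(X,Y)$ is finite, and let $1\le p\le\infty$. Then $$\|X-Y\|_p\;\le\;2^{\frac1p}\,\frac{e^d-1}{e^d}\,\max\big[\|X\|_p,\|Y\|_p\big].$$
   Context: For Hermitian matrices $A,B$, write $A\le B$ (Löwner order) if $B-A$ is positive semidefinite. The Thompson metric of Hermitian matrices $X,Y$ is $d_T(X,Y)=\inf\{\log\alpha:\ \alpha\ge 1,\ X\le\alpha Y,\ Y\le \alpha X\}$, with $d_T(X,Y)=+\infty$ if no such $\alpha$ exists. For positive semidefinite $X,Y$ this is the usual $\log\max\{M(X/Y),M(Y/X)\}$, where $M(X/Y)=\inf\{\lambda>0: X\le\lambda Y\}$. For a Hermitian matrix $M$ with eigenvalues $\mu_1\ge\dots\ge\mu_n$, the Schatten $p$-norm is $\|M\|_p=(\sum_{i=1}^n|\mu_i|^p)^{1/p}$ for $1\le p<\infty$. For $p=\infty$ it is $\max_i|\mu_i|$ (the spectral norm), and $2^{1/\infty}=1$. *)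

theory Defs
  imports "Jordan_Normal_Form.Char_Poly" "HOL-Computational_Algebra.Polynomial" "HOL-Library.Extended_Real"
begin

definition hermitian :: "complex mat \<Rightarrow> bool" where
  "hermitian A \<longleftrightarrow> dim_row A = dim_col A \<and>
     (\<forall>i<dim_row A. \<forall>j<dim_row A. A $$ (i, j) = cnj (A $$ (j, i)))"

text \<open>Positive semidefinite: Hermitian with v^* A v \<ge> 0 for all v (the form is real for Hermitian A).\<close>
definition psd :: "complex mat \<Rightarrow> bool" where
  "psd A \<longleftrightarrow> hermitian A \<and>
     (\<forall>v. dim_vec v = dim_row A \<longrightarrow>
        0 \<le> Re (\<Sum>i<dim_row A. \<Sum>j<dim_row A. cnj (v $ i) * A $$ (i, j) * v $ j))"

definition loewner_le :: "complex mat \<Rightarrow> complex mat \<Rightarrow> bool" where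
  "loewner_le A B \<longleftrightarrow> dim_row A = dim_row B \<and> dim_col A = dim_col B \<and> psd (B - A)"

text \<open>Thompson metric, with value +\<infinity> when no admissible \<alpha> exists (Inf of the empty set).\<close>
definition thompson :: "complex mat \<Rightarrow> complex mat \<Rightarrow> ereal" where
  "thompson X Y = Inf ((\<lambda>\<alpha>. ereal (ln \<alpha>)) `
     {\<alpha>::real. 1 \<le> \<alpha> \<and> loewner_le X (complex_of_real \<alpha> \<cdot>\<^sub>m Y) \<and> loewner_le Y (complex_of_real \<alpha> \<cdot>\<^sub>m X)})"

definition eigvals :: "complex mat \<Rightarrow> complex multiset" where
  "eigvals A = proots (char_poly A)"

definition schatten_norm :: "ereal \<Rightarrow> complex mat \<Rightarrow> real" where
  "schatten_norm p M =
     (if p = \<infinity> then Max (insert 0 (cmod ` set_mset (eigvals M)))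
      else (\<Sum>\<^sub># (image_mset (\<lambda>\<mu>. cmod \<mu> powr real_of_ereal p) (eigvals M)))
             powr (1 / real_of_ereal p))"

definition two_pow_inv :: "ereal \<Rightarrow> real" where
  "two_pow_inv p = (if p = \<infinity> then 1 else 2 powr (1 / real_of_ereal p))"

end

theory Submission imports Defs "Jordan_Normal_Form.Schur_Decomposition" "HOL-Analysis.Convex"
  "HOL-Computational_Algebra.Fundamental_Theorem_Algebra" begin

definition adj :: "complex mat \<Rightarrow> complex mat" where
  "adj A = mat (dim_col A) (dim_row A) (\<lambda>(i,j). cnj (A $$ (j,i)))"

lemma dim_adj[simp]: "dim_row (adj A) = dim_col A" "dim_col (adj A) = dim_row A"
  by (auto simp: adj_def)

lemma adj_index[simp]: "i < dim_col A \<Longrightarrow> j < dim_row A \<Longrightarrow> adj A $$ (i,j) = cnj (A $$ (j,i))"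
  unfolding adj_def by simp
lemma adj_carrier[simp]: "A \<in> carrier_mat n m \<Longrightarrow> adj A \<in> carrier_mat m n"
  unfolding carrier_mat_def by simp

lemma adj_adj[simp]: "adj (adj A) = A"
  by (rule eq_matI) auto

lemma adj_one[simp]: "adj (1\<^sub>m n) = 1\<^sub>m n"
  by (rule eq_matI) auto
lemma adj_mult: assumes "A \<in> carrier_mat n k" "B \<in> carrier_mat k m"
  shows "adj (A * B) = adj B * adj A"
proof (rule eq_matI)
  fix i j assume ij: "i < dim_row (adj B * adj A)" "j < dim_col (adj B * adj A)"
  have "adj (A * B) $$ (i,j) = cnj (\<Sum>l<k. A $$ (j,l) * B $$ (l,i))"
    using assms ij by (simp add: scalar_prod_def atLeast0LessThan)
  also have "\<dots> = (\<Sum>l<k. cnj (B $$ (l,i)) * cnj (A $$ (j,l)))"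
    by (simp add: mult.commute)
  also have "\<dots> = (adj B * adj A) $$ (i,j)"
    using assms ij by (simp add: scalar_prod_def atLeast0LessThan)
  finally show "adj (A * B) $$ (i,j) = (adj B * adj A) $$ (i,j)" .
qed (use assms in auto)

lemma hermitianD: "hermitian A \<Longrightarrow> i < dim_row A \<Longrightarrow> j < dim_row A \<Longrightarrow> A $$ (i,j) = cnj (A $$ (j,i))"
  unfolding hermitian_def by blast

lemma hermitian_adj: "hermitian A \<longleftrightarrow> dim_row A = dim_col A \<and> adj A = A"
proof
  assume h: "hermitian A"
  then have d: "dim_row A = dim_col A" by (simp add: hermitian_def)
  have "adj A = A"
  proof (rule eq_matI)
    fix i j assume ij: "i < dim_row A" "j < dim_col A"
    have "A $$ (j,i) = cnj (A $$ (i,j))" using hermitianD[OF h, of j i] ij d by simp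
    then show "adj A $$ (i,j) = A $$ (i,j)" using ij d by simp
  qed (use d in simp_all)
  with d show "dim_row A = dim_col A \<and> adj A = A" by simp
next
  assume a: "dim_row A = dim_col A \<and> adj A = A"
  show "hermitian A" unfolding hermitian_def
  proof (intro conjI allI impI)
    fix i j assume ij: "i < dim_row A" "j < dim_row A"
    have e: "adj A $$ (i,j) = cnj (A $$ (j,i))" using a ij by (intro adj_index) auto
    from e a show "A $$ (i,j) = cnj (A $$ (j,i))" by simp
  qed (use a in simp)
qed

lemma cscalar_smult: fixes w w' :: "complex vec"
  assumes "w \<in> carrier_vec n" "w' \<in> carrier_vec n"
  shows "(a \<cdot>\<^sub>v w) \<bullet>c (b \<cdot>\<^sub>v w') = a * cnj b * (w \<bullet>c w')"
  using assms unfolding scalar_prod_def by (simp add: sum_distrib_left mult_ac)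

lemma cscalar_self_pos: fixes w :: "complex vec"
  assumes "w \<in> carrier_vec n" "w \<noteq> 0\<^sub>v n"
  shows "Im (w \<bullet>c w) = 0" "Re (w \<bullet>c w) > 0"
proof -
  have "w \<bullet>c w > 0" using conjugate_square_greater_0_vec assms by blast
  then show "Im (w \<bullet>c w) = 0" "Re (w \<bullet>c w) > 0" by (auto simp: less_complex_def)
qed

definition nrm :: "complex vec \<Rightarrow> complex vec" where
  "nrm w = complex_of_real (1 / sqrt (Re (w \<bullet>c w))) \<cdot>\<^sub>v w"

lemma nrm_unit: fixes w :: "complex vec"
  assumes "w \<in> carrier_vec n" "w \<noteq> 0\<^sub>v n"
  shows "nrm w \<bullet>c nrm w = 1"
proof -
  note p = cscalar_self_pos[OF assms]
  define r where "r = Re (w \<bullet>c w)"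
  have e: "w \<bullet>c w = complex_of_real r" using p by (simp add: complex_eq_iff r_def)
  have rr: "(1 / sqrt r) * (1 / sqrt r) * r = 1" using p(2) unfolding r_def[symmetric]
    by (simp add: field_simps)
  have "nrm w \<bullet>c nrm w = complex_of_real (1 / sqrt r) * cnj (complex_of_real (1 / sqrt r)) * (w \<bullet>c w)"
    unfolding nrm_def r_def[symmetric] by (rule cscalar_smult[OF assms(1) assms(1)])
  also have "\<dots> = complex_of_real ((1 / sqrt r) * (1 / sqrt r) * r)" unfolding e of_real_mult by simp
  also have "\<dots> = 1" unfolding rr by simp
  finally show ?thesis .
qed

lemma nrm_unit_id: assumes "w \<bullet>c w = 1" shows "nrm w = w"
  using assms by (simp add: nrm_def)

lemma nrm_carrier[simp]: "w \<in> carrier_vec n \<Longrightarrow> nrm w \<in> carrier_vec n"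
  by (simp add: nrm_def)

lemma onb_exists: fixes v :: "complex vec"
  assumes v: "v \<in> carrier_vec n" and v1: "v \<bullet>c v = 1"
  shows "\<exists>ws. set ws \<subseteq> carrier_vec n \<and> length ws = n \<and> hd ws = v \<and>
     (\<forall>i<n. \<forall>j<n. ws!i \<bullet>c ws!j = (if i = j then 1 else 0))"
proof -
  have v0: "v \<noteq> 0\<^sub>v n" using v1 v by auto
  interpret cof_vec_space n "TYPE(complex)" .
  define b where "b = basis_completion v"
  from basis_completion[OF v v0, folded b_def]
  have dist_b: "distinct b" and indep: "\<not> lin_dep (set b)" and bc: "set b \<subseteq> carrier_vec n"
    and hdb: "hd b = v" and len_b: "length b = n" by auto
  define gs where "gs = gram_schmidt n b"
  from gram_schmidt_result[OF bc dist_b indep refl, folded gs_def]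
  have gs: "set gs \<subseteq> carrier_vec n" "corthogonal gs" "length gs = n" by (auto simp: len_b)
  have hdgs: "hd gs = v"
  proof (cases b)
    case Nil then show ?thesis using gs len_b hdb v0 v by auto
  next
    case (Cons x xs) then show ?thesis using hdb gs_def v by simp
  qed
  define ws where "ws = map nrm gs"
  have gsnz: "gs ! i \<noteq> 0\<^sub>v n" if "i < n" for i
  proof
    assume "gs ! i = 0\<^sub>v n"
    then have "gs ! i \<bullet>c gs ! i = 0" by simp
    with corthogonalD[OF gs(2), of i i] that gs(3) show False by auto
  qed
  have gsc: "gs ! i \<in> carrier_vec n" if "i < n" for i using gs that by auto
  have "ws!i \<bullet>c ws!j = (if i = j then 1 else 0)" if "i < n" "j < n" for i j
  proof (cases "i = j")
    case True then show ?thesis using nrm_unit[OF gsc gsnz] that gs(3) by (simp add: ws_def)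
  next
    case False
    have "ws!i \<bullet>c ws!j = complex_of_real (1 / sqrt (Re (gs!i \<bullet>c gs!i))) * cnj (complex_of_real (1 / sqrt (Re (gs!j \<bullet>c gs!j)))) * (gs!i \<bullet>c gs!j)"
      unfolding ws_def nrm_def using that gs(3) by (simp only: nth_map, intro cscalar_smult[OF gsc gsc]) auto
    also have "gs!i \<bullet>c gs!j = 0" using corthogonalD[OF gs(2), of i j] that gs(3) False by auto
    finally show ?thesis using False by simp
  qed
  moreover have "hd ws = v" unfolding ws_def using hdgs gs(3) v1
    by (cases gs) (auto simp: nrm_unit_id)
  moreover have "set ws \<subseteq> carrier_vec n" using gs(1) by (auto simp: ws_def)
  moreover have "length ws = n" using gs(3) by (simp add: ws_def)
  ultimately show ?thesis by blast
qed


lemma mult_idx: assumes "A \<in> carrier_mat nr k" "B \<in> carrier_mat k nc" "i < nr" "j < nc"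
  shows "(A * B) $$ (i,j) = (\<Sum>l<k. A $$ (i,l) * B $$ (l,j))"
  using assms by (simp add: scalar_prod_def atLeast0LessThan)

lemma unitary_of_onb: fixes ws :: "complex vec list"
  assumes ws: "set ws \<subseteq> carrier_vec n" "length ws = n"
    and on: "\<forall>i<n. \<forall>j<n. ws!i \<bullet>c ws!j = (if i = j then 1 else 0)"
  defines "W \<equiv> mat_of_cols n ws"
  shows "W \<in> carrier_mat n n" "adj W * W = 1\<^sub>m n" "W * adj W = 1\<^sub>m n"
proof -
  show W: "W \<in> carrier_mat n n" unfolding W_def using mat_of_cols_carrier(1)[of n ws] ws by simp
  show AW: "adj W * W = 1\<^sub>m n"
  proof (rule eq_matI)
    fix i j assume ij: "i < dim_row (1\<^sub>m n :: complex mat)" "j < dim_col (1\<^sub>m n :: complex mat)"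
    then have ij: "i < n" "j < n" by auto
    have c: "ws ! i \<in> carrier_vec n" "ws ! j \<in> carrier_vec n" using ws ij by auto
    have "(adj W * W) $$ (i,j) = (\<Sum>l<n. adj W $$ (i,l) * W $$ (l,j))"
      by (rule mult_idx[OF adj_carrier[OF W] W ij])
    also have "\<dots> = (\<Sum>l<n. ws ! j $ l * cnj (ws ! i $ l))"
      using W ij ws by (intro sum.cong) (auto simp: W_def mat_of_cols_index)
    also have "\<dots> = ws ! j \<bullet>c ws ! i"
      using c by (simp add: scalar_prod_def atLeast0LessThan)
    also have "\<dots> = 1\<^sub>m n $$ (i,j)" using on ij by auto
    finally show "(adj W * W) $$ (i,j) = 1\<^sub>m n $$ (i,j)" .
  qed (use W in auto)
  show "W * adj W = 1\<^sub>m n"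
    by (rule mat_mult_left_right_inverse[OF adj_carrier[OF W] W AW])
qed

lemma hermitian_conj: assumes A: "A \<in> carrier_mat n n" and h: "hermitian A"
  and W: "W \<in> carrier_mat n k"
  shows "hermitian (adj W * A * W)"
proof -
  have aA: "adj A = A" using h by (simp add: hermitian_adj)
  have "adj (adj W * A * W) = adj W * adj (adj W * A)"
    by (rule adj_mult[of _ k n]) (use A W in auto)
  also have "adj (adj W * A) = adj A * adj (adj W)"
    by (rule adj_mult[of _ k n]) (use A W in auto)
  also have "adj W * (adj A * adj (adj W)) = adj W * A * W"
    unfolding aA adj_adj by (rule assoc_mult_mat[symmetric, of _ k n _ n _ k]) (use A W in auto)
  finally show ?thesis unfolding hermitian_adj using A W by simp
qed

lemma spectral:
  assumes "A \<in> carrier_mat n n" "hermitian A"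
  shows "\<exists>P B. similar_mat_wit A B P (adj P) \<and> diagonal_mat B \<and> (\<forall>i<n. Im (B $$ (i,i)) = 0)"
  using assms
proof (induct n arbitrary: A)
  case 0
  then have A: "A \<in> carrier_mat 0 0" by simp
  have "similar_mat_wit A A (1\<^sub>m 0) (adj (1\<^sub>m 0))" using similar_mat_wit_refl[OF A] by simp
  moreover have "diagonal_mat A" using A by (simp add: diagonal_mat_def)
  ultimately show ?case by blast
next
  case (Suc m A)
  define n where "n = Suc m"
  have A: "A \<in> carrier_mat n n" and h: "hermitian A" using Suc n_def by auto
  have n1: "1 + m = n" by (simp add: n_def)
  have deg: "degree (char_poly A) = n" using degree_monic_char_poly[OF A] by simp
  then have "\<not> constant (poly (char_poly A))" unfolding constant_degree deg n_def by simp
  then obtain e where "poly (char_poly A) e = 0" using fundamental_theorem_of_algebra by blast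
  then have ev: "eigenvalue A e" using eigenvalue_root_char_poly[OF A] by simp
  then obtain v0 where "eigenvector A v0 e" unfolding eigenvalue_def by blast
  then have v0: "v0 \<in> carrier_vec n" "v0 \<noteq> 0\<^sub>v n" "A *\<^sub>v v0 = e \<cdot>\<^sub>v v0"
    unfolding eigenvector_def using A by auto
  define v where "v = nrm v0"
  have v: "v \<in> carrier_vec n" "v \<bullet>c v = 1" using v0 nrm_unit unfolding v_def by auto
  have Av: "A *\<^sub>v v = e \<cdot>\<^sub>v v" unfolding v_def nrm_def
    using v0 A by (simp add: mult_mat_vec smult_smult_assoc mult.commute)
  obtain ws where ws: "set ws \<subseteq> carrier_vec n" "length ws = n" "hd ws = v"
    and on: "\<forall>i<n. \<forall>j<n. ws!i \<bullet>c ws!j = (if i = j then 1 else 0)"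
    using onb_exists[OF v] by blast
  define W where "W = mat_of_cols n ws"
  note Wu = unitary_of_onb[OF ws(1,2) on, folded W_def]
  have W: "W \<in> carrier_mat n n" using Wu by simp
  have aW: "adj W \<in> carrier_mat n n" using W by simp
  define A' where "A' = adj W * A * W"
  have A': "A' \<in> carrier_mat n n" unfolding A'_def using mult_carrier_mat[OF mult_carrier_mat[OF aW A] W] .
  have hA': "hermitian A'" unfolding A'_def by (rule hermitian_conj[OF A h W])
  have ws0: "ws ! 0 = v" using ws(2,3) n_def by (cases ws) auto
  have colW0: "col W 0 = v" unfolding W_def using ws ws0 n_def v(1) by (intro trans[OF col_mat_of_cols]) auto
  have col0: "A' $$ (i,0) = (if i = 0 then e else 0)" if i: "i < n" for i
  proof -
    have "A' = adj W * (A * W)" unfolding A'_def by (rule assoc_mult_mat[OF aW A W])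
    then have "A' $$ (i,0) = row (adj W) i \<bullet> col (A * W) 0"
      using i W A n_def by simp
    also have "col (A * W) 0 = A *\<^sub>v col W 0" by (rule col_mult2[OF A W]) (simp add: n_def)
    also have "\<dots> = e \<cdot>\<^sub>v col W 0" unfolding colW0 Av ..
    also have "row (adj W) i \<bullet> (e \<cdot>\<^sub>v col W 0) = e * (row (adj W) i \<bullet> col W 0)"
      by (rule scalar_prod_smult_distrib[of _ n]) (use i W in auto)
    also have "row (adj W) i \<bullet> col W 0 = (adj W * W) $$ (i,0)"
      using i W n_def by simp
    also have "\<dots> = (if i = 0 then 1 else 0)" unfolding Wu(2) using i n_def by simp
    finally show ?thesis by simp
  qed
  have e0: "A' $$ (0,0) = e" using col0[of 0] n_def by simp
  have ereal: "Im e = 0"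
  proof -
    have "A' $$ (0,0) = cnj (A' $$ (0,0))" using hermitianD[OF hA', of 0 0] A' n_def by simp
    then have "e = cnj e" unfolding e0 .
    then have "Im e = Im (cnj e)" by (rule arg_cong)
    then show ?thesis by simp
  qed
  have row0: "A' $$ (0,j) = (if j = 0 then e else 0)" if j: "j < n" for j
  proof -
    have "A' $$ (0,j) = cnj (A' $$ (j,0))" using hermitianD[OF hA', of 0 j] A' j n_def by simp
    also have "\<dots> = (if j = 0 then cnj e else 0)" using col0[OF j] by simp
    also have "cnj e = e" using ereal by (simp add: complex_eq_iff)
    finally show ?thesis .
  qed
  define A3 where "A3 = mat m m (\<lambda>(i,j). A' $$ (Suc i, Suc j))"
  have A3: "A3 \<in> carrier_mat m m" unfolding A3_def by simp
  have hA3: "hermitian A3" unfolding hermitian_def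
  proof (intro conjI allI impI)
    fix i j assume ij: "i < dim_row A3" "j < dim_row A3"
    then show "A3 $$ (i,j) = cnj (A3 $$ (j,i))"
      using hermitianD[OF hA', of "Suc i" "Suc j"] A' A3 n_def by (simp add: A3_def)
  qed (simp add: A3_def)
  define E where "E = mat 1 1 (\<lambda>_. e)"
  have E: "E \<in> carrier_mat 1 1" unfolding E_def by simp
  have blk: "A' = four_block_mat E (0\<^sub>m 1 m) (0\<^sub>m m 1) A3"
  proof (rule eq_matI)
    fix i j assume ij: "i < dim_row (four_block_mat E (0\<^sub>m 1 m) (0\<^sub>m m 1) A3)"
      "j < dim_col (four_block_mat E (0\<^sub>m 1 m) (0\<^sub>m m 1) A3)"
    then have ij': "i < n" "j < n" using E A3 n_def by auto
    show "A' $$ (i,j) = four_block_mat E (0\<^sub>m 1 m) (0\<^sub>m m 1) A3 $$ (i,j)"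
    proof (cases "i = 0")
      case True then show ?thesis using row0[OF ij'(2)] ij E A3 by (simp add: E_def)
    next
      case False
      show ?thesis
      proof (cases "j = 0")
        case True then show ?thesis using col0[OF ij'(1)] ij E A3 False by (simp add: E_def)
      next
        case False2: False
        then obtain i' j' where "i = Suc i'" "j = Suc j'" using False by (metis not0_implies_Suc)
        then show ?thesis using ij E A3 by (simp add: A3_def)
      qed
    qed
  qed (use A' E A3 n_def in auto)
  from Suc(1)[OF A3 hA3] obtain P3 B3 where sim3: "similar_mat_wit A3 B3 P3 (adj P3)"
    and d3: "diagonal_mat B3" and r3: "\<forall>i<m. Im (B3 $$ (i,i)) = 0" by blast
  from similar_mat_witD2[OF A3 sim3] have B3: "B3 \<in> carrier_mat m m" and P3: "P3 \<in> carrier_mat m m"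
    by auto
  have sim1: "similar_mat_wit E E (1\<^sub>m 1) (1\<^sub>m 1)" by (rule similar_mat_wit_refl[OF E])
  have z1: "0\<^sub>m 1 m = 1\<^sub>m 1 * 0\<^sub>m 1 m * adj P3" using P3 by simp
  have z2: "0\<^sub>m m 1 = P3 * 0\<^sub>m m 1 * 1\<^sub>m 1" using P3 by simp
  define P' where "P' = four_block_mat (1\<^sub>m 1) (0\<^sub>m 1 m) (0\<^sub>m m 1) P3"
  define B' where "B' = four_block_mat E (0\<^sub>m 1 m) (0\<^sub>m m 1) B3"
  have sim': "similar_mat_wit A' B' P' (four_block_mat (1\<^sub>m 1) (0\<^sub>m 1 m) (0\<^sub>m m 1) (adj P3))"
    unfolding blk B'_def P'_def
    by (rule similar_mat_wit_four_block[OF sim1 sim3 z1 z2 E A3]) auto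
  have P'c: "P' \<in> carrier_mat n n" unfolding P'_def using P3 n1 by (metis four_block_carrier_mat one_carrier_mat)
  have adjP': "four_block_mat (1\<^sub>m 1) (0\<^sub>m 1 m) (0\<^sub>m m 1) (adj P3) = adj P'"
  proof (rule eq_matI)
    fix i j assume ij: "i < dim_row (adj P')" "j < dim_col (adj P')"
    then have ij': "i < 1 + m" "j < 1 + m" using P'c n1 by auto
    then show "four_block_mat (1\<^sub>m 1) (0\<^sub>m 1 m) (0\<^sub>m m 1) (adj P3) $$ (i,j) = adj P' $$ (i,j)"
      using P3 P'c n1 unfolding P'_def by auto
  qed (use P3 P'c n1 in \<open>auto simp: P'_def\<close>)
  have simW': "similar_mat_wit A' A (adj W) W"
    by (rule similar_mat_witI[OF Wu(2) Wu(3) A'_def A' A aW W])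
  have simW: "similar_mat_wit A A' W (adj W)" using similar_mat_wit_sym[OF simW'] .
  have simA: "similar_mat_wit A B' (W * P') (adj (W * P'))"
    using similar_mat_wit_trans[OF simW sim'[unfolded adjP']] adj_mult[OF W P'c] by simp
  have "diagonal_mat B'" unfolding diagonal_mat_def
  proof (intro allI impI)
    fix i j assume ij: "i < dim_row B'" "j < dim_col B'" "i \<noteq> j"
    then show "B' $$ (i,j) = 0" using d3 E B3 unfolding B'_def diagonal_mat_def
      by (auto simp: E_def)
  qed
  moreover have "\<forall>i<Suc m. Im (B' $$ (i,i)) = 0"
  proof (intro allI impI)
    fix i assume i: "i < Suc m"
    then show "Im (B' $$ (i,i)) = 0" using r3 E B3 ereal unfolding B'_def by (auto simp: E_def)
  qed
  ultimately show ?case using simA by blast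
qed

lemma proots_linear_prod: "proots (\<Prod>a\<leftarrow>xs. [:- a, 1:]) = mset (xs :: complex list)"
proof (induct xs)
  case Nil then show ?case by simp
next
  case (Cons a xs)
  have nz: "(\<Prod>a\<leftarrow>xs. [:- a, 1:]) \<noteq> (0 :: complex poly)"
    by (auto simp: prod_list_zero_iff)
  have "proots (\<Prod>a\<leftarrow>a # xs. [:- a, 1:]) = proots ([:- a, 1:] * (\<Prod>a\<leftarrow>xs. [:- a, 1:]))" by simp
  also have "\<dots> = proots [:- a, 1:] + proots (\<Prod>a\<leftarrow>xs. [:- a, 1:])"
    by (rule proots_mult) (use nz in auto)
  finally show ?case using Cons by simp
qed

lemma eigvals_sim_diag:
  assumes A: "A \<in> carrier_mat n n" and sim: "similar_mat_wit A B P Q" and d: "diagonal_mat B"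
  shows "eigvals A = mset (map (\<lambda>i. B $$ (i,i)) [0..<n])"
proof -
  have B: "B \<in> carrier_mat n n" using similar_mat_witD2[OF A sim] by auto
  have "char_poly A = char_poly B" using sim by (intro char_poly_similar) (auto simp: similar_mat_def)
  also have "upper_triangular B" using d B unfolding diagonal_mat_def upper_triangular_def by auto
  then have "char_poly B = (\<Prod>a\<leftarrow>diag_mat B. [:- a, 1:])" by (rule char_poly_upper_triangular[OF B])
  finally have "eigvals A = mset (diag_mat B)" unfolding eigvals_def by (simp add: proots_linear_prod)
  then show ?thesis unfolding diag_mat_def using B by simp
qed


definition qf :: "complex mat \<Rightarrow> complex vec \<Rightarrow> complex" where
  "qf M v = (\<Sum>i<dim_row M. \<Sum>j<dim_row M. cnj (v $ i) * M $$ (i,j) * v $ j)"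

lemma psd_qf: "psd M \<Longrightarrow> dim_vec v = dim_row M \<Longrightarrow> 0 \<le> Re (qf M v)"
  unfolding psd_def qf_def by blast

lemma qf_minus: assumes "M1 \<in> carrier_mat n n" "M2 \<in> carrier_mat n n"
  shows "qf (M1 - M2) v = qf M1 v - qf M2 v"
  using assms unfolding qf_def by (simp add: sum_subtractf algebra_simps)

lemma qf_smult: "M \<in> carrier_mat n n \<Longrightarrow> qf (c \<cdot>\<^sub>m M) v = c * qf M v"
  unfolding qf_def sum_distrib_left by (intro sum.cong refl) (auto simp: sum_distrib_left mult_ac)


lemma qf_col: assumes M: "M \<in> carrier_mat n n" and U: "U \<in> carrier_mat n n" and k: "k < n"
  shows "qf M (col U k) = (adj U * M * U) $$ (k,k)"
proof -
  have aU: "adj U \<in> carrier_mat n n" using U by simp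
  have aUM: "adj U * M \<in> carrier_mat n n" using aU M by simp
  have "(adj U * M * U) $$ (k,k) = (\<Sum>l<n. (adj U * M) $$ (k,l) * U $$ (l,k))"
    by (rule mult_idx[OF aUM U k k])
  also have "\<dots> = (\<Sum>l<n. (\<Sum>i<n. cnj (U $$ (i,k)) * M $$ (i,l)) * U $$ (l,k))"
  proof (rule sum.cong[OF refl])
    fix l assume l: "l \<in> {..<n}"
    have "(adj U * M) $$ (k,l) = (\<Sum>i<n. adj U $$ (k,i) * M $$ (i,l))"
      by (rule mult_idx[OF aU M k]) (use l in auto)
    also have "\<dots> = (\<Sum>i<n. cnj (U $$ (i,k)) * M $$ (i,l))"
      using U k by (intro sum.cong) auto
    finally show "(adj U * M) $$ (k,l) * U $$ (l,k) = (\<Sum>i<n. cnj (U $$ (i,k)) * M $$ (i,l)) * U $$ (l,k)"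
      by simp
  qed
  also have "\<dots> = (\<Sum>l<n. \<Sum>i<n. cnj (U $$ (i,k)) * M $$ (i,l) * U $$ (l,k))"
    by (simp add: sum_distrib_right)
  also have "\<dots> = (\<Sum>i<n. \<Sum>l<n. cnj (U $$ (i,k)) * M $$ (i,l) * U $$ (l,k))"
    by (rule sum.swap)
  also have "\<dots> = qf M (col U k)"
    unfolding qf_def using M U k by (intro sum.cong refl) auto
  finally show ?thesis by simp
qed

lemma qf_diag: assumes B: "B \<in> carrier_mat n n" and d: "diagonal_mat B"
  shows "qf B v = (\<Sum>i<n. complex_of_real ((cmod (v $ i))\<^sup>2) * B $$ (i,i))"
proof -
  have "qf B v = (\<Sum>i<n. \<Sum>j<n. if j = i then cnj (v $ i) * B $$ (i,i) * v $ i else 0)"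
    unfolding qf_def using B d unfolding diagonal_mat_def by (intro sum.cong refl) auto
  also have "\<dots> = (\<Sum>i<n. cnj (v $ i) * B $$ (i,i) * v $ i)"
    by simp
  also have "\<dots> = (\<Sum>i<n. complex_of_real ((cmod (v $ i))\<^sup>2) * B $$ (i,i))"
  proof (intro sum.cong refl)
    fix i
    have "cnj (v $ i) * B $$ (i,i) * v $ i = (v $ i * cnj (v $ i)) * B $$ (i,i)" by (simp add: mult_ac)
    also have "v $ i * cnj (v $ i) = complex_of_real ((cmod (v $ i))\<^sup>2)" by (rule complex_norm_square[symmetric])
    finally show "cnj (v $ i) * B $$ (i,i) * v $ i = complex_of_real ((cmod (v $ i))\<^sup>2) * B $$ (i,i)" .
  qed
  finally show ?thesis .
qed

lemma unitary_rows_cols: assumes S: "S \<in> carrier_mat n n" and u1: "adj S * S = 1\<^sub>m n" and u2: "S * adj S = 1\<^sub>m n"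
  shows "\<And>k. k < n \<Longrightarrow> (\<Sum>j<n. (cmod (S $$ (j,k)))\<^sup>2) = 1"
    "\<And>j. j < n \<Longrightarrow> (\<Sum>k<n. (cmod (S $$ (j,k)))\<^sup>2) = 1"
proof -
  fix k assume k: "k < n"
  have "1 = (adj S * S) $$ (k,k)" using u1 k by simp
  also have "\<dots> = (\<Sum>j<n. adj S $$ (k,j) * S $$ (j,k))" by (rule mult_idx[OF adj_carrier[OF S] S k k])
  also have "\<dots> = (\<Sum>j<n. complex_of_real ((cmod (S $$ (j,k)))\<^sup>2))"
  proof (intro sum.cong refl)
    fix j assume "j \<in> {..<n}"
    then have "adj S $$ (k,j) * S $$ (j,k) = S $$ (j,k) * cnj (S $$ (j,k))" using S k by simp
    also have "\<dots> = complex_of_real ((cmod (S $$ (j,k)))\<^sup>2)" by (rule complex_norm_square[symmetric])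
    finally show "adj S $$ (k,j) * S $$ (j,k) = complex_of_real ((cmod (S $$ (j,k)))\<^sup>2)" .
  qed
  also have "\<dots> = complex_of_real (\<Sum>j<n. (cmod (S $$ (j,k)))\<^sup>2)" by simp
  finally show "(\<Sum>j<n. (cmod (S $$ (j,k)))\<^sup>2) = 1" by (metis of_real_eq_1_iff)
next
  fix j assume j: "j < n"
  have "1 = (S * adj S) $$ (j,j)" using u2 j by simp
  also have "\<dots> = (\<Sum>k<n. S $$ (j,k) * adj S $$ (k,j))" by (rule mult_idx[OF S adj_carrier[OF S] j j])
  also have "\<dots> = (\<Sum>k<n. complex_of_real ((cmod (S $$ (j,k)))\<^sup>2))"
  proof (intro sum.cong refl)
    fix k assume "k \<in> {..<n}"
    then have "S $$ (j,k) * adj S $$ (k,j) = S $$ (j,k) * cnj (S $$ (j,k))" using S j by simp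
    also have "\<dots> = complex_of_real ((cmod (S $$ (j,k)))\<^sup>2)" by (rule complex_norm_square[symmetric])
    finally show "S $$ (j,k) * adj S $$ (k,j) = complex_of_real ((cmod (S $$ (j,k)))\<^sup>2)" .
  qed
  also have "\<dots> = complex_of_real (\<Sum>k<n. (cmod (S $$ (j,k)))\<^sup>2)" by simp
  finally show "(\<Sum>k<n. (cmod (S $$ (j,k)))\<^sup>2) = 1" by (metis of_real_eq_1_iff)
qed

lemma eig_basis:
  assumes M: "M \<in> carrier_mat n n" and h: "hermitian M"
  shows "\<exists>U lam. U \<in> carrier_mat n n \<and> adj U * U = 1\<^sub>m n \<and> U * adj U = 1\<^sub>m n \<and>
     eigvals M = mset (map (\<lambda>k. complex_of_real (lam k)) [0..<n]) \<and> (\<forall>k<n. Re (qf M (col U k)) = lam k)"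
proof -
  obtain P B where sim: "similar_mat_wit M B P (adj P)" and d: "diagonal_mat B"
    and r: "\<forall>i<n. Im (B $$ (i,i)) = 0" using spectral[OF M h] by blast
  note sd = similar_mat_witD2[OF M sim]
  have B: "B \<in> carrier_mat n n" and P: "P \<in> carrier_mat n n" using sd by auto
  have Beq: "B = adj P * M * P" by (rule similar_mat_witD2(3)[OF B similar_mat_wit_sym[OF sim]])
  define lam where "lam k = Re (B $$ (k,k))" for k
  have "eigvals M = mset (map (\<lambda>i. B $$ (i,i)) [0..<n])" by (rule eigvals_sim_diag[OF M sim d])
  also have "map (\<lambda>i. B $$ (i,i)) [0..<n] = map (\<lambda>k. complex_of_real (lam k)) [0..<n]"
    using r by (auto simp: lam_def complex_eq_iff)
  finally have ev: "eigvals M = mset (map (\<lambda>k. complex_of_real (lam k)) [0..<n])" .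
  have "Re (qf M (col P k)) = lam k" if k: "k < n" for k
    using qf_col[OF M P k] Beq by (simp add: lam_def)
  with ev P sd show ?thesis by blast
qed

lemma weights:
  assumes M: "M \<in> carrier_mat n n" and h: "hermitian M"
    and U: "U \<in> carrier_mat n n" and u1: "adj U * U = 1\<^sub>m n" and u2: "U * adj U = 1\<^sub>m n"
  shows "\<exists>xi s. eigvals M = mset (map (\<lambda>j. complex_of_real (xi j)) [0..<n]) \<and>
     (\<forall>k<n. Re (qf M (col U k)) = (\<Sum>j<n. s j k * xi j)) \<and> (\<forall>j k. 0 \<le> s j k) \<and>
     (\<forall>k<n. (\<Sum>j<n. s j k) = 1) \<and> (\<forall>j<n. (\<Sum>k<n. s j k) = 1)"
proof -
  obtain P B where sim: "similar_mat_wit M B P (adj P)" and d: "diagonal_mat B"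
    and r: "\<forall>i<n. Im (B $$ (i,i)) = 0" using spectral[OF M h] by blast
  note sd = similar_mat_witD2[OF M sim]
  have B: "B \<in> carrier_mat n n" and P: "P \<in> carrier_mat n n" using sd by auto
  have aP: "adj P \<in> carrier_mat n n" and aU: "adj U \<in> carrier_mat n n" using P U by auto
  have Meq: "M = P * B * adj P" by (rule sd(3))
  define xi where "xi k = Re (B $$ (k,k))" for k
  have "eigvals M = mset (map (\<lambda>i. B $$ (i,i)) [0..<n])" by (rule eigvals_sim_diag[OF M sim d])
  also have "map (\<lambda>i. B $$ (i,i)) [0..<n] = map (\<lambda>k. complex_of_real (xi k)) [0..<n]"
    using r by (auto simp: xi_def complex_eq_iff)
  finally have ev: "eigvals M = mset (map (\<lambda>k. complex_of_real (xi k)) [0..<n])" .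
  define S where "S = adj P * U"
  have S: "S \<in> carrier_mat n n" unfolding S_def using aP U by simp
  have aS: "adj S = adj U * P" unfolding S_def by (simp add: adj_mult[OF aP U])
  have PaP: "P * adj P = 1\<^sub>m n" and aPP: "adj P * P = 1\<^sub>m n" using sd by auto
  have su1: "adj S * S = 1\<^sub>m n"
  proof -
    have "adj S * S = adj U * P * (adj P * U)" unfolding aS unfolding S_def ..
    also have "\<dots> = adj U * (P * (adj P * U))" by (rule assoc_mult_mat[OF aU P mult_carrier_mat[OF aP U]])
    also have "P * (adj P * U) = (P * adj P) * U" by (rule assoc_mult_mat[symmetric, OF P aP U])
    finally show ?thesis using PaP u1 U by simp
  qed
  have su2: "S * adj S = 1\<^sub>m n"
  proof -
    have "S * adj S = adj P * U * (adj U * P)" unfolding aS unfolding S_def ..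
    also have "\<dots> = adj P * (U * (adj U * P))" by (rule assoc_mult_mat[OF aP U mult_carrier_mat[OF aU P]])
    also have "U * (adj U * P) = (U * adj U) * P" by (rule assoc_mult_mat[symmetric, OF U aU P])
    finally show ?thesis using aPP u2 P by simp
  qed
  define s where "s j k = (cmod (S $$ (j,k)))\<^sup>2" for j k
  have conj: "adj U * M * U = adj S * B * S"
  proof -
    have "adj U * M * U = adj U * (P * B * adj P) * U" unfolding Meq ..
    also have "\<dots> = adj U * (P * B * adj P * U)"
      by (rule assoc_mult_mat[OF aU _ U]) (use P B aP in auto)
    also have "P * B * adj P * U = P * B * (adj P * U)"
      by (rule assoc_mult_mat[OF mult_carrier_mat[OF P B] aP U])
    also have "\<dots> = P * (B * (adj P * U))"
      by (rule assoc_mult_mat[OF P B mult_carrier_mat[OF aP U]])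
    also have "adj U * (P * (B * (adj P * U))) = adj U * P * (B * (adj P * U))"
      by (rule assoc_mult_mat[symmetric, OF aU P mult_carrier_mat[OF B mult_carrier_mat[OF aP U]]])
    also have "\<dots> = adj U * P * B * (adj P * U)"
      by (rule assoc_mult_mat[symmetric, OF mult_carrier_mat[OF aU P] B mult_carrier_mat[OF aP U]])
    finally show ?thesis unfolding aS unfolding S_def .
  qed
  have "Re (qf M (col U k)) = (\<Sum>j<n. s j k * xi j)" if k: "k < n" for k
  proof -
    have "qf M (col U k) = (adj S * B * S) $$ (k,k)" using qf_col[OF M U k] conj by simp
    also have "\<dots> = qf B (col S k)" using qf_col[OF B S k] by simp
    also have "\<dots> = (\<Sum>j<n. complex_of_real ((cmod (col S k $ j))\<^sup>2) * B $$ (j,j))"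
      by (rule qf_diag[OF B d])
    also have "\<dots> = (\<Sum>j<n. complex_of_real (s j k) * B $$ (j,j))"
      using S k by (intro sum.cong refl) (auto simp: s_def)
    finally have "Re (qf M (col U k)) = (\<Sum>j<n. s j k * Re (B $$ (j,j)))" by simp
    then show ?thesis by (simp add: xi_def)
  qed
  moreover have "\<forall>j k. 0 \<le> s j k" by (simp add: s_def)
  moreover have "\<forall>k<n. (\<Sum>j<n. s j k) = 1" using unitary_rows_cols(1)[OF S su1 su2] by (simp add: s_def)
  moreover have "\<forall>j<n. (\<Sum>k<n. s j k) = 1" using unitary_rows_cols(2)[OF S su1 su2] by (simp add: s_def)
  ultimately show ?thesis using ev by blast
qed

lemma powr_scale_le: fixes t y p :: real
  assumes "0 < t" "t \<le> 1" "1 \<le> p" "0 \<le> y"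
  shows "(t * y) powr p \<le> t * y powr p"
proof -
  have "(t * y) powr p = t powr p * y powr p" by (rule powr_mult)
  also have "\<dots> \<le> t * y powr p"
    by (rule mult_right_mono[OF powr_le_one_le[OF assms(1-3)]]) simp
  finally show ?thesis .
qed

lemma convex_powr0: assumes p: "1 \<le> p" shows "convex_on {0..} (\<lambda>x::real. x powr p)"
proof (rule convex_onI)
  fix t x y :: real assume t: "0 < t" "t < 1" and x: "x \<in> {0..}" and y: "y \<in> {0..}"
  show "((1 - t) *\<^sub>R x + t *\<^sub>R y) powr p \<le> (1 - t) * x powr p + t * y powr p"
  proof (cases "x = 0")
    case True
    then show ?thesis using powr_scale_le[where t=t and y=y and p=p] t p y by simp
  next
    case x0: False
    show ?thesis
    proof (cases "y = 0")
      case True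
      then show ?thesis using powr_scale_le[where t="1-t" and y=x and p=p] t p x by simp
    next
      case False
      then have "x \<in> {0<..}" "y \<in> {0<..}" using x y x0 by auto
      from convex_onD[OF powr_convex[OF p], of t x y, OF _ _ this] t show ?thesis by simp
    qed
  qed
qed (simp add: convex_real_interval)

lemma jensen_powr: fixes s a :: "nat \<Rightarrow> real"
  assumes p: "1 \<le> p" and s: "\<And>j. 0 \<le> s j" and s1: "(\<Sum>j<n. s j) = 1" and a: "\<And>j. 0 \<le> a j"
  shows "(\<Sum>j<n. s j * a j) powr p \<le> (\<Sum>j<n. s j * a j powr p)"
proof -
  have "{..<n} \<noteq> {}" using s1 by auto
  from convex_on_sum[OF finite_lessThan this convex_powr0[OF p] s1, of a] s a
  show ?thesis by simp
qed

lemma pt_bound: fixes x y a :: real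
  assumes a: "1 \<le> a" and c1: "x \<le> a * y" and c2: "y \<le> a * x"
  shows "\<bar>x - y\<bar> \<le> (1 - 1/a) * x \<or> \<bar>x - y\<bar> \<le> (1 - 1/a) * y"
proof (cases "y \<le> x")
  case True
  have "x / a \<le> y" using c1 a by (simp add: divide_le_eq mult.commute)
  then have "\<bar>x - y\<bar> \<le> (1 - 1/a) * x" using True by (simp add: algebra_simps)
  then show ?thesis by blast
next
  case False
  have "y / a \<le> x" using c2 a by (simp add: divide_le_eq mult.commute)
  then have "\<bar>x - y\<bar> \<le> (1 - 1/a) * y" using False by (simp add: algebra_simps)
  then show ?thesis by blast
qed

lemma wsum_abs: fixes s xi :: "nat \<Rightarrow> real" assumes "\<And>j. 0 \<le> s j"
  shows "(\<Sum>j<n. s j * xi j) \<le> (\<Sum>j<n. s j * \<bar>xi j\<bar>)"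
  by (rule sum_mono) (use assms in \<open>simp add: mult_left_mono\<close>)

lemma wsum_max: fixes s xi :: "nat \<Rightarrow> real" assumes "\<And>j. 0 \<le> s j" "(\<Sum>j<n. s j) = 1"
  and "\<And>j. j < n \<Longrightarrow> \<bar>xi j\<bar> \<le> B"
  shows "(\<Sum>j<n. s j * \<bar>xi j\<bar>) \<le> B"
proof -
  have "(\<Sum>j<n. s j * \<bar>xi j\<bar>) \<le> (\<Sum>j<n. s j * B)"
    by (rule sum_mono) (use assms in \<open>simp add: mult_left_mono\<close>)
  also have "\<dots> = B" using assms(2) by (simp add: sum_distrib_right[symmetric])
  finally show ?thesis .
qed

lemma core_p:
  fixes lam xi eta :: "nat \<Rightarrow> real" and s t :: "nat \<Rightarrow> nat \<Rightarrow> real" and a p :: real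
  assumes a: "1 \<le> a" and p: "1 \<le> p"
    and s0: "\<And>j k. 0 \<le> s j k" and t0: "\<And>j k. 0 \<le> t j k"
    and sc: "\<And>k. k < n \<Longrightarrow> (\<Sum>j<n. s j k) = 1" and sr: "\<And>j. j < n \<Longrightarrow> (\<Sum>k<n. s j k) = 1"
    and tc: "\<And>k. k < n \<Longrightarrow> (\<Sum>j<n. t j k) = 1" and tr: "\<And>j. j < n \<Longrightarrow> (\<Sum>k<n. t j k) = 1"
    and lam: "\<And>k. k < n \<Longrightarrow> lam k = (\<Sum>j<n. s j k * xi j) - (\<Sum>j<n. t j k * eta j)"
    and c1: "\<And>k. k < n \<Longrightarrow> (\<Sum>j<n. s j k * xi j) \<le> a * (\<Sum>j<n. t j k * eta j)"
    and c2: "\<And>k. k < n \<Longrightarrow> (\<Sum>j<n. t j k * eta j) \<le> a * (\<Sum>j<n. s j k * xi j)"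
  shows "(\<Sum>k<n. \<bar>lam k\<bar> powr p) \<le> (1 - 1/a) powr p * ((\<Sum>j<n. \<bar>xi j\<bar> powr p) + (\<Sum>j<n. \<bar>eta j\<bar> powr p))"
proof -
  define c where "c = 1 - 1/a"
  have c0: "0 \<le> c" using a by (simp add: c_def)
  define X where "X k = (\<Sum>j<n. s j k * \<bar>xi j\<bar>)" for k
  define Y where "Y k = (\<Sum>j<n. t j k * \<bar>eta j\<bar>)" for k
  have X0: "0 \<le> X k" for k unfolding X_def by (intro sum_nonneg) (simp add: s0)
  have Y0: "0 \<le> Y k" for k unfolding Y_def by (intro sum_nonneg) (simp add: t0)
  have pt: "\<bar>lam k\<bar> powr p \<le> c powr p * ((\<Sum>j<n. s j k * \<bar>xi j\<bar> powr p) + (\<Sum>j<n. t j k * \<bar>eta j\<bar> powr p))"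
    if k: "k < n" for k
  proof -
    have xb: "(\<Sum>j<n. s j k * xi j) \<le> X k" unfolding X_def by (rule wsum_abs) (simp add: s0)
    have yb: "(\<Sum>j<n. t j k * eta j) \<le> Y k" unfolding Y_def by (rule wsum_abs) (simp add: t0)
    have d: "\<bar>lam k\<bar> \<le> c * (\<Sum>j<n. s j k * xi j) \<or> \<bar>lam k\<bar> \<le> c * (\<Sum>j<n. t j k * eta j)"
      using pt_bound[OF a c1[OF k] c2[OF k]] lam[OF k] unfolding c_def by simp
    have m1: "c * (\<Sum>j<n. s j k * xi j) \<le> c * X k" by (rule mult_left_mono[OF xb c0])
    have m2: "c * (\<Sum>j<n. t j k * eta j) \<le> c * Y k" by (rule mult_left_mono[OF yb c0])
    from d m1 m2 have "\<bar>lam k\<bar> \<le> c * X k \<or> \<bar>lam k\<bar> \<le> c * Y k" by linarith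
    then have "\<bar>lam k\<bar> powr p \<le> (c * X k) powr p \<or> \<bar>lam k\<bar> powr p \<le> (c * Y k) powr p"
      using p by (meson abs_ge_zero powr_mono2 order_trans zero_le_one)
    moreover have "0 \<le> (c * X k) powr p" "0 \<le> (c * Y k) powr p" by simp_all
    ultimately have "\<bar>lam k\<bar> powr p \<le> (c * X k) powr p + (c * Y k) powr p" by linarith
    also have "\<dots> = c powr p * (X k powr p + Y k powr p)" by (simp add: powr_mult algebra_simps)
    also have "X k powr p \<le> (\<Sum>j<n. s j k * \<bar>xi j\<bar> powr p)" unfolding X_def
      by (rule jensen_powr[OF p _ sc[OF k]]) (simp_all add: s0)
    also have "Y k powr p \<le> (\<Sum>j<n. t j k * \<bar>eta j\<bar> powr p)" unfolding Y_def
      by (rule jensen_powr[OF p _ tc[OF k]]) (simp_all add: t0)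
    finally show ?thesis by (simp add: mult_left_mono)
  qed
  have "(\<Sum>k<n. \<bar>lam k\<bar> powr p) \<le> (\<Sum>k<n. c powr p * ((\<Sum>j<n. s j k * \<bar>xi j\<bar> powr p) + (\<Sum>j<n. t j k * \<bar>eta j\<bar> powr p)))"
    by (rule sum_mono) (use pt in auto)
  also have "\<dots> = c powr p * ((\<Sum>k<n. \<Sum>j<n. s j k * \<bar>xi j\<bar> powr p) + (\<Sum>k<n. \<Sum>j<n. t j k * \<bar>eta j\<bar> powr p))"
    by (simp only: sum_distrib_left[symmetric] sum.distrib)
  also have "(\<Sum>k<n. \<Sum>j<n. s j k * \<bar>xi j\<bar> powr p) = (\<Sum>j<n. \<Sum>k<n. s j k * \<bar>xi j\<bar> powr p)"
    by (rule sum.swap)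
  also have "\<dots> = (\<Sum>j<n. \<bar>xi j\<bar> powr p)"
    by (intro sum.cong refl) (simp add: sum_distrib_right[symmetric] sr)
  also have "(\<Sum>k<n. \<Sum>j<n. t j k * \<bar>eta j\<bar> powr p) = (\<Sum>j<n. \<Sum>k<n. t j k * \<bar>eta j\<bar> powr p)"
    by (rule sum.swap)
  also have "\<dots> = (\<Sum>j<n. \<bar>eta j\<bar> powr p)"
    by (intro sum.cong refl) (simp add: sum_distrib_right[symmetric] tr)
  finally show ?thesis unfolding c_def .
qed

lemma core_inf:
  fixes lam xi eta :: "nat \<Rightarrow> real" and s t :: "nat \<Rightarrow> nat \<Rightarrow> real" and a Bx By :: real
  assumes a: "1 \<le> a"
    and s0: "\<And>j k. 0 \<le> s j k" and t0: "\<And>j k. 0 \<le> t j k"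
    and sc: "\<And>k. k < n \<Longrightarrow> (\<Sum>j<n. s j k) = 1"
    and tc: "\<And>k. k < n \<Longrightarrow> (\<Sum>j<n. t j k) = 1"
    and lam: "\<And>k. k < n \<Longrightarrow> lam k = (\<Sum>j<n. s j k * xi j) - (\<Sum>j<n. t j k * eta j)"
    and c1: "\<And>k. k < n \<Longrightarrow> (\<Sum>j<n. s j k * xi j) \<le> a * (\<Sum>j<n. t j k * eta j)"
    and c2: "\<And>k. k < n \<Longrightarrow> (\<Sum>j<n. t j k * eta j) \<le> a * (\<Sum>j<n. s j k * xi j)"
    and bx: "\<And>j. j < n \<Longrightarrow> \<bar>xi j\<bar> \<le> Bx" and bY: "\<And>j. j < n \<Longrightarrow> \<bar>eta j\<bar> \<le> By"
    and k: "k < n"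
  shows "\<bar>lam k\<bar> \<le> (1 - 1/a) * max Bx By"
proof -
  define c where "c = 1 - 1/a"
  have c0: "0 \<le> c" using a by (simp add: c_def)
  have xb: "(\<Sum>j<n. s j k * xi j) \<le> max Bx By"
    using wsum_abs[of "\<lambda>j. s j k" xi n] wsum_max[of "\<lambda>j. s j k" n xi Bx] s0 sc[OF k] bx by force
  have yb: "(\<Sum>j<n. t j k * eta j) \<le> max Bx By"
    using wsum_abs[of "\<lambda>j. t j k" eta n] wsum_max[of "\<lambda>j. t j k" n eta By] t0 tc[OF k] bY by force
  have d: "\<bar>lam k\<bar> \<le> c * (\<Sum>j<n. s j k * xi j) \<or> \<bar>lam k\<bar> \<le> c * (\<Sum>j<n. t j k * eta j)"
    using pt_bound[OF a c1[OF k] c2[OF k]] lam[OF k] unfolding c_def by simp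
  have m1: "c * (\<Sum>j<n. s j k * xi j) \<le> c * max Bx By" by (rule mult_left_mono[OF xb c0])
  have m2: "c * (\<Sum>j<n. t j k * eta j) \<le> c * max Bx By" by (rule mult_left_mono[OF yb c0])
  from d m1 m2 show ?thesis unfolding c_def[symmetric] by linarith
qed

lemma schatten_fin: assumes ev: "eigvals M = mset (map (\<lambda>k. complex_of_real (f k)) [0..<n])"
  and p: "p \<noteq> \<infinity>"
  shows "schatten_norm p M = (\<Sum>k<n. \<bar>f k\<bar> powr real_of_ereal p) powr (1 / real_of_ereal p)"
proof -
  have "(\<Sum>\<^sub># (image_mset (\<lambda>\<mu>. cmod \<mu> powr real_of_ereal p) (eigvals M)))
      = (\<Sum>k<n. \<bar>f k\<bar> powr real_of_ereal p)"
    unfolding ev by (simp add: sum_unfold_sum_mset image_mset.compositionality o_def atLeast0LessThan)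
  then show ?thesis unfolding schatten_norm_def using p by simp
qed

lemma schatten_inf: assumes ev: "eigvals M = mset (map (\<lambda>k. complex_of_real (f k)) [0..<n])"
  shows "schatten_norm \<infinity> M = Max (insert 0 ((\<lambda>k. \<bar>f k\<bar>) ` {..<n}))"
proof -
  have "cmod ` set_mset (eigvals M) = (\<lambda>k. \<bar>f k\<bar>) ` {..<n}"
    unfolding ev by (auto simp: atLeast0LessThan image_image)
  then show ?thesis unfolding schatten_norm_def by simp
qed

lemma powr_max: fixes A B r :: real assumes "0 \<le> A" "0 \<le> B" "0 \<le> r"
  shows "(max A B) powr r = max (A powr r) (B powr r)"
proof (cases "A \<le> B")
  case True
  then have "A powr r \<le> B powr r" using assms by (intro powr_mono2) auto
  then show ?thesis using True by (simp add: max_def)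
next
  case False
  then have "B powr r \<le> A powr r" using assms by (intro powr_mono2) auto
  then show ?thesis using False by (simp add: max_def)
qed

lemma fin_final: fixes L A B c q :: real
  assumes c: "0 \<le> c" and A: "0 \<le> A" and B: "0 \<le> B" and L: "0 \<le> L" and q: "1 \<le> q"
    and le: "L \<le> c powr q * (A + B)"
  shows "L powr (1/q) \<le> 2 powr (1/q) * c * max (A powr (1/q)) (B powr (1/q))"
proof -
  have r: "0 \<le> 1/q" using q by simp
  have "L powr (1/q) \<le> (c powr q * (A + B)) powr (1/q)" by (rule powr_mono2[OF r L le])
  also have "\<dots> \<le> (c powr q * (2 * max A B)) powr (1/q)"
    by (rule powr_mono2[OF r]) (use A B in \<open>auto intro!: mult_left_mono\<close>)
  also have "\<dots> = (c powr q) powr (1/q) * 2 powr (1/q) * (max A B) powr (1/q)"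
    by (simp add: powr_mult)
  also have "(c powr q) powr (1/q) = c" using q c by (simp add: powr_powr)
  also have "(max A B) powr (1/q) = max (A powr (1/q)) (B powr (1/q))" by (rule powr_max[OF A B r])
  finally show ?thesis by (simp add: mult_ac)
qed

lemma hermitian_minus: assumes "X \<in> carrier_mat n n" "Y \<in> carrier_mat n n" "hermitian X" "hermitian Y"
  shows "hermitian (X - Y)"
  unfolding hermitian_def
proof (intro conjI allI impI)
  fix i j assume ij: "i < dim_row (X - Y)" "j < dim_row (X - Y)"
  then show "(X - Y) $$ (i,j) = cnj ((X - Y) $$ (j,i))"
    using assms hermitianD[OF assms(3), of i j] hermitianD[OF assms(4), of i j] by simp
qed (use assms in simp)

lemma bound_alpha:
  fixes X Y :: "complex mat" and p :: ereal and a :: real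
  assumes X: "X \<in> carrier_mat n n" and Y: "Y \<in> carrier_mat n n"
    and hX: "hermitian X" and hY: "hermitian Y" and a: "1 \<le> a"
    and l1: "loewner_le X (complex_of_real a \<cdot>\<^sub>m Y)" and l2: "loewner_le Y (complex_of_real a \<cdot>\<^sub>m X)"
    and p: "1 \<le> p"
  shows "schatten_norm p (X - Y) \<le> two_pow_inv p * (1 - 1/a) * max (schatten_norm p X) (schatten_norm p Y)"
proof -
  have D: "X - Y \<in> carrier_mat n n" by (rule minus_carrier_mat[OF Y])
  have hD: "hermitian (X - Y)" by (rule hermitian_minus[OF X Y hX hY])
  obtain U lam where U: "U \<in> carrier_mat n n" and u1: "adj U * U = 1\<^sub>m n" and u2: "U * adj U = 1\<^sub>m n"
    and evD: "eigvals (X - Y) = mset (map (\<lambda>k. complex_of_real (lam k)) [0..<n])"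
    and qD: "\<forall>k<n. Re (qf (X - Y) (col U k)) = lam k"
    using eig_basis[OF D hD] by blast
  obtain xi s where evX: "eigvals X = mset (map (\<lambda>j. complex_of_real (xi j)) [0..<n])"
    and qX: "\<forall>k<n. Re (qf X (col U k)) = (\<Sum>j<n. s j k * xi j)" and s0: "\<forall>j k. 0 \<le> s j k"
    and sc: "\<forall>k<n. (\<Sum>j<n. s j k) = 1" and sr: "\<forall>j<n. (\<Sum>k<n. s j k) = 1"
    using weights[OF X hX U u1 u2] by blast
  obtain eta t where evY: "eigvals Y = mset (map (\<lambda>j. complex_of_real (eta j)) [0..<n])"
    and qY: "\<forall>k<n. Re (qf Y (col U k)) = (\<Sum>j<n. t j k * eta j)" and t0: "\<forall>j k. 0 \<le> t j k"
    and tc: "\<forall>k<n. (\<Sum>j<n. t j k) = 1" and tr: "\<forall>j<n. (\<Sum>k<n. t j k) = 1"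
    using weights[OF Y hY U u1 u2] by blast
  have aY: "complex_of_real a \<cdot>\<^sub>m Y \<in> carrier_mat n n" and aX: "complex_of_real a \<cdot>\<^sub>m X \<in> carrier_mat n n"
    using X Y by auto
  have lam: "lam k = (\<Sum>j<n. s j k * xi j) - (\<Sum>j<n. t j k * eta j)" if k: "k < n" for k
    using qD qX qY k qf_minus[OF X Y, of "col U k"] by auto
  have c1: "(\<Sum>j<n. s j k * xi j) \<le> a * (\<Sum>j<n. t j k * eta j)" if k: "k < n" for k
  proof -
    have ps: "psd (complex_of_real a \<cdot>\<^sub>m Y - X)" using l1 unfolding loewner_le_def by simp
    have "0 \<le> Re (qf (complex_of_real a \<cdot>\<^sub>m Y - X) (col U k))"
      by (rule psd_qf[OF ps]) (use U X Y in simp)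
    also have "qf (complex_of_real a \<cdot>\<^sub>m Y - X) (col U k) = complex_of_real a * qf Y (col U k) - qf X (col U k)"
      using qf_minus[OF aY X] qf_smult[OF Y] by simp
    finally show ?thesis using qX qY k by simp
  qed
  have c2: "(\<Sum>j<n. t j k * eta j) \<le> a * (\<Sum>j<n. s j k * xi j)" if k: "k < n" for k
  proof -
    have ps: "psd (complex_of_real a \<cdot>\<^sub>m X - Y)" using l2 unfolding loewner_le_def by simp
    have "0 \<le> Re (qf (complex_of_real a \<cdot>\<^sub>m X - Y) (col U k))"
      by (rule psd_qf[OF ps]) (use U X Y in simp)
    also have "qf (complex_of_real a \<cdot>\<^sub>m X - Y) (col U k) = complex_of_real a * qf X (col U k) - qf Y (col U k)"
      using qf_minus[OF aX Y] qf_smult[OF X] by simp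
    finally show ?thesis using qX qY k by simp
  qed
  have c0: "0 \<le> 1 - 1/a" using a by simp
  show ?thesis
  proof (cases "p = \<infinity>")
    case True
    define Bx where "Bx = Max (insert 0 ((\<lambda>k. \<bar>xi k\<bar>) ` {..<n}))"
    define By where "By = Max (insert 0 ((\<lambda>k. \<bar>eta k\<bar>) ` {..<n}))"
    have bx: "\<bar>xi j\<bar> \<le> Bx" if "j < n" for j unfolding Bx_def using that by (intro Max_ge) auto
    have bY: "\<bar>eta j\<bar> \<le> By" if "j < n" for j unfolding By_def using that by (intro Max_ge) auto
    have Bx0: "0 \<le> Bx" unfolding Bx_def by (intro Max_ge) auto
    have "schatten_norm p (X - Y) = Max (insert 0 ((\<lambda>k. \<bar>lam k\<bar>) ` {..<n}))"
      using schatten_inf[OF evD] True by simp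
    also have "\<dots> \<le> (1 - 1/a) * max Bx By"
    proof (rule Max.boundedI)
      fix z assume "z \<in> insert 0 ((\<lambda>k. \<bar>lam k\<bar>) ` {..<n})"
      then show "z \<le> (1 - 1/a) * max Bx By"
      proof
        assume "z = 0" then show ?thesis using c0 Bx0 by simp
      next
        assume "z \<in> (\<lambda>k. \<bar>lam k\<bar>) ` {..<n}"
        then obtain k where k: "k < n" and z: "z = \<bar>lam k\<bar>" by auto
        show ?thesis unfolding z
          by (rule core_inf[of a s t n lam xi eta Bx By k]) (use a s0 t0 sc tc lam c1 c2 bx bY k in auto)
      qed
    qed simp_all
    also have "\<dots> = two_pow_inv p * (1 - 1/a) * max (schatten_norm p X) (schatten_norm p Y)"
      using True schatten_inf[OF evX] schatten_inf[OF evY] by (simp add: two_pow_inv_def Bx_def By_def)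
    finally show ?thesis .
  next
    case False
    define q where "q = real_of_ereal p"
    have pq: "p = ereal q" using False p unfolding q_def by (cases p) auto
    have q1: "1 \<le> q" using p pq by simp
    have sum_le: "(\<Sum>k<n. \<bar>lam k\<bar> powr q) \<le> (1 - 1/a) powr q * ((\<Sum>j<n. \<bar>xi j\<bar> powr q) + (\<Sum>j<n. \<bar>eta j\<bar> powr q))"
      by (rule core_p[OF a q1]) (use s0 t0 sc sr tc tr lam c1 c2 in auto)
    have "schatten_norm p (X - Y) = (\<Sum>k<n. \<bar>lam k\<bar> powr q) powr (1 / q)"
      using schatten_fin[OF evD False] q_def by simp
    also have "\<dots> \<le> 2 powr (1/q) * (1 - 1/a) * max ((\<Sum>j<n. \<bar>xi j\<bar> powr q) powr (1/q)) ((\<Sum>j<n. \<bar>eta j\<bar> powr q) powr (1/q))"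
      by (rule fin_final[OF c0 _ _ _ q1 sum_le]) (auto intro: sum_nonneg)
    also have "\<dots> = two_pow_inv p * (1 - 1/a) * max (schatten_norm p X) (schatten_norm p Y)"
      using False schatten_fin[OF evX False] schatten_fin[OF evY False] by (simp add: two_pow_inv_def q_def)
    finally show ?thesis .
  qed
qed

lemma exp_gap: fixes d a :: real
  assumes d: "0 \<le> d" and a: "1 \<le> a" and da: "d \<le> ln a"
  shows "1 - 1/a \<le> (exp d - 1) / exp d + (ln a - d)"
proof -
  define u where "u = ln a - d"
  have u: "0 \<le> u" using da by (simp add: u_def)
  have ia: "1/a = exp (-d) * exp (-u)" using a unfolding u_def
    by (simp add: exp_add[symmetric] exp_minus[symmetric]) (simp add: exp_minus divide_inverse)
  have e1: "(exp d - 1) / exp d = 1 - exp (-d)" by (simp add: field_simps exp_minus)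
  have h1: "1 - exp (-u) \<le> u" using exp_ge_add_one_self[of "-u"] by simp
  have h2: "0 \<le> 1 - exp (-u)" using u by simp
  have h3: "exp (-d) \<le> 1" using d by simp
  have "exp (-d) * (1 - exp (-u)) \<le> 1 * (1 - exp (-u))"
    by (rule mult_right_mono[OF h3 h2])
  then show ?thesis unfolding e1 ia u_def[symmetric] using h1 by (simp add: algebra_simps)
qed

lemma schatten_nonneg: "0 \<le> schatten_norm p M"
proof (cases "p = \<infinity>")
  case True
  have "finite (insert 0 (cmod ` set_mset (eigvals M)))" by simp
  then show ?thesis using True unfolding schatten_norm_def by (simp add: Max_ge)
qed (simp add: schatten_norm_def)

lemma two_pow_inv_nonneg: "0 \<le> two_pow_inv p"
  by (simp add: two_pow_inv_def)

theorem theorem3: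
  fixes X Y :: "complex mat" and n :: nat and p :: ereal
  assumes "X \<in> carrier_mat n n" and "Y \<in> carrier_mat n n"
    and "hermitian X" and "hermitian Y"
    and "thompson X Y \<noteq> \<infinity>"
    and "1 \<le> p"
  shows "schatten_norm p (X - Y) \<le>
    two_pow_inv p * ((exp (real_of_ereal (thompson X Y)) - 1) / exp (real_of_ereal (thompson X Y)))
      * max (schatten_norm p X) (schatten_norm p Y)"
proof -
  note X = assms(1) and Y = assms(2) and hX = assms(3) and hY = assms(4) and fin = assms(5) and p = assms(6)
  define S where "S = {\<alpha>::real. 1 \<le> \<alpha> \<and> loewner_le X (complex_of_real \<alpha> \<cdot>\<^sub>m Y) \<and> loewner_le Y (complex_of_real \<alpha> \<cdot>\<^sub>m X)}"
  define T where "T = (\<lambda>\<alpha>. ereal (ln \<alpha>)) ` S"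
  have th: "thompson X Y = Inf T" unfolding thompson_def T_def S_def ..
  have T0: "0 \<le> Inf T" unfolding T_def S_def by (rule Inf_greatest) auto
  obtain d where d: "Inf T = ereal d" using fin T0 th by (cases "Inf T") auto
  have d0: "0 \<le> d" using T0 d by simp
  have rd: "real_of_ereal (thompson X Y) = d" using th d by simp
  define G where "G = two_pow_inv p * max (schatten_norm p X) (schatten_norm p Y)"
  have G0: "0 \<le> G" unfolding G_def using two_pow_inv_nonneg schatten_nonneg
    by (simp add: le_max_iff_disj)
  define L where "L = schatten_norm p (X - Y)"
  define cd where "cd = (exp d - 1) / exp d"
  have key: "L \<le> G * cd + e" if e: "0 < e" for e
  proof -
    define \<delta> where "\<delta> = e / (G + 1)"
    have \<delta>: "0 < \<delta>" using e G0 by (simp add: \<delta>_def)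
    have "Inf T < ereal (d + \<delta>)" using d \<delta> by simp
    then obtain t where t: "t \<in> T" "t < ereal (d + \<delta>)" by (auto simp: Inf_less_iff)
    then obtain a where aS: "a \<in> S" and ta: "t = ereal (ln a)" unfolding T_def by auto
    have a1: "1 \<le> a" and l1: "loewner_le X (complex_of_real a \<cdot>\<^sub>m Y)"
      and l2: "loewner_le Y (complex_of_real a \<cdot>\<^sub>m X)" using aS unfolding S_def by auto
    have "Inf T \<le> t" by (rule Inf_lower[OF t(1)])
    then have da: "d \<le> ln a" using d ta by simp
    have lt: "ln a < d + \<delta>" using t(2) ta by simp
    have "L \<le> two_pow_inv p * (1 - 1/a) * max (schatten_norm p X) (schatten_norm p Y)"
      unfolding L_def by (rule bound_alpha[OF X Y hX hY a1 l1 l2 p])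
    also have "\<dots> = G * (1 - 1/a)" unfolding G_def by (simp add: mult_ac)
    also have "\<dots> \<le> G * (cd + \<delta>)"
    proof (rule mult_left_mono[OF _ G0])
      show "1 - 1/a \<le> cd + \<delta>" using exp_gap[OF d0 a1 da] lt unfolding cd_def by linarith
    qed
    also have "\<dots> = G * cd + G * \<delta>" by (simp add: algebra_simps)
    also have "G * \<delta> \<le> e"
    proof -
      have "G * \<delta> = e * (G / (G + 1))" unfolding \<delta>_def using G0 by (simp add: field_simps)
      also have "\<dots> \<le> e * 1" using G0 e by (intro mult_left_mono) auto
      finally show ?thesis by simp
    qed
    finally show ?thesis by simp
  qed
  have "L \<le> G * cd" by (rule field_le_epsilon) (use key in auto)
  then show ?thesis unfolding L_def G_def cd_def rd by (simp add: mult_ac)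
qed

end
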